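(* Let $s,t,z$ be positive integers, $p=\min\{\lfloor\frac{z-1}{ts-t}\rfloor,t-1\}$ (with $p=t-1$ when $s=1$), and let $N_{\text{PolyDot-CMPC}}$ and $N_{\text{SSMM}}$ be as in the context. Then $N_{\text{PolyDot-CMPC}}<N_{\text{SSMM}}$ in the two regions 1. $z>\max\{ts,\,ts-t+\frac{pts}{t-1}\}$, $t\ne1$; 2. $\frac{t-1}{t-2}(st-t)<z\le ts$; and for all other values of $s,t,z$, $N_{\text{PolyDot-CMPC}}\ge N_{\text{SSMM}}$.
   Context: $N_{\text{PolyDot-CMPC}}$ is the number of workers needed by the PolyDot-CMPC scheme, given by: with $\theta'=2ts-t$ and $\upsilon'=\max\{ts-2t-s+2,\frac{ts-2t+1}{2}\}$, $N_{\text{PolyDot-CMPC}}=(p+2)ts+\theta'(t-1)+2z-1$ if $ts<z$ or $t=1$; $=2ts+\theta'(t-1)+3z-1$ if $ts-t<z\le ts$, $s,t\ne1$; $=2ts+\theta'(t-1)+2z-1$ if $ts-2t<z\le ts-t$, $s,t\ne1$; $=(t+1)ts+(t-1)(z+t-1)+2z-1$ if $\upsilon'<z\le ts-2t$, $s,t\ne1$; $=\theta't+z$ if $z\le\upsilon'$, $s,t\ne1$; $=t^2+2t+tz-1$ if $s=1$, $t\ge z$, $t\ne1$. $N_{\text{SSMM}}=(t+1)(ts+z)-1$ is the number of workers of the SSMM baseline. Here $s,t$ are the numbers of row/column partitions and $z$ the number of colluding workers. *)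

theory Defs
  imports Complex_Main
begin

definition polydot_p :: "nat \<Rightarrow> nat \<Rightarrow> nat \<Rightarrow> int" where
  "polydot_p s t z =
     (if s = 1 then int t - 1
      else min \<lfloor>real (z - 1) / (real (t * s) - real t)\<rfloor> (int t - 1))"

definition N_PolyDot_CMPC :: "nat \<Rightarrow> nat \<Rightarrow> nat \<Rightarrow> int" where
  "N_PolyDot_CMPC s t z =
    (let S = int s; T = int t; Z = int z; ts = T * S; p = polydot_p s t z;
         \<theta> = 2 * ts - T;
         \<upsilon> = max (real_of_int (ts - 2 * T - S + 2)) (real_of_int (ts - 2 * T + 1) / 2)
     in if ts < Z \<or> t = 1 then (p + 2) * ts + \<theta> * (T - 1) + 2 * Z - 1
        else if s \<noteq> 1 \<and> t \<noteq> 1 \<and> ts - T < Z \<and> Z \<le> ts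
          then 2 * ts + \<theta> * (T - 1) + 3 * Z - 1
        else if s \<noteq> 1 \<and> t \<noteq> 1 \<and> ts - 2 * T < Z \<and> Z \<le> ts - T
          then 2 * ts + \<theta> * (T - 1) + 2 * Z - 1
        else if s \<noteq> 1 \<and> t \<noteq> 1 \<and> \<upsilon> < real_of_int Z \<and> Z \<le> ts - 2 * T
          then (T + 1) * ts + (T - 1) * (Z + T - 1) + 2 * Z - 1
        else if s \<noteq> 1 \<and> t \<noteq> 1 \<and> real_of_int Z \<le> \<upsilon>
          then \<theta> * T + Z
        else if s = 1 \<and> z \<le> t \<and> t \<noteq> 1
          then T ^ 2 + 2 * T + T * Z - 1
        else undefined)"

definition N_SSMM :: "nat \<Rightarrow> nat \<Rightarrow> nat \<Rightarrow> int" where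
  "N_SSMM s t z = (int t + 1) * (int t * int s + int z) - 1"

end

theory Submission
  imports Defs
begin

lemma half_le: "real_of_int a \<le> real_of_int b / 2 \<Longrightarrow> 2 * a \<le> (b::int)"
proof -
  assume "real_of_int a \<le> real_of_int b / 2"
  then have "real_of_int (2 * a) \<le> real_of_int b" by simp
  then show ?thesis by (simp only: of_int_le_iff)
qed

theorem lemma2:
  fixes s t z :: nat
  assumes "s > 0" and "t > 0" and "z > 0"
  shows "N_PolyDot_CMPC s t z < N_SSMM s t z \<longleftrightarrow>
           ((t \<noteq> 1 \<and>
             real z > max (real (t * s))
                          (real (t * s) - real t
                           + real_of_int (polydot_p s t z) * real (t * s) / (real t - 1)))
          \<or> (s \<noteq> 1 \<and> t > 2 \<and>
             (real t - 1) / (real t - 2) * (real (s * t) - real t) < real z \<and> z \<le> t * s))"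
proof -
  define P where "P = polydot_p s t z"
  define th where "th = 2 * (int t * int s) - int t"
  define u where "u = max (real_of_int (int t * int s - 2 * int t - int s + 2)) (real_of_int (int t * int s - 2 * int t + 1) / 2)"
  have SS: "N_SSMM s t z = (int t + 1) * (int t * int s + int z) - 1"
    by (simp add: N_SSMM_def)
  have ND: "N_PolyDot_CMPC s t z =
     (if int t * int s < int z \<or> t = 1 then (P + 2) * (int t * int s) + th * (int t - 1) + 2 * int z - 1
        else if s \<noteq> 1 \<and> t \<noteq> 1 \<and> int t * int s - int t < int z \<and> int z \<le> int t * int s
          then 2 * (int t * int s) + th * (int t - 1) + 3 * int z - 1
        else if s \<noteq> 1 \<and> t \<noteq> 1 \<and> int t * int s - 2 * int t < int z \<and> int z \<le> int t * int s - int t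
          then 2 * (int t * int s) + th * (int t - 1) + 2 * int z - 1
        else if s \<noteq> 1 \<and> t \<noteq> 1 \<and> u < real_of_int (int z) \<and> int z \<le> int t * int s - 2 * int t
          then (int t + 1) * (int t * int s) + (int t - 1) * (int z + int t - 1) + 2 * int z - 1
        else if s \<noteq> 1 \<and> t \<noteq> 1 \<and> real_of_int (int z) \<le> u
          then th * int t + int z
        else if s = 1 \<and> z \<le> t \<and> t \<noteq> 1
          then int t ^ 2 + 2 * int t + int t * int z - 1
        else undefined)"
    unfolding N_PolyDot_CMPC_def P_def th_def u_def Let_def by simp

  have PS: "polydot_p s t z = P" by (simp add: P_def)
  have RHS2: "(s \<noteq> 1 \<and> t > 2 \<and>
             (real t - 1) / (real t - 2) * (real (s * t) - real t) < real z \<and> z \<le> t * s)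
     \<longleftrightarrow> (s \<noteq> 1 \<and> t > 2 \<and> (int t - 1) * (int s * int t - int t) < (int t - 2) * int z \<and> z \<le> t * s)"
  proof (cases "t > 2")
    case True
    then have tp: "real t - 2 > 0" by simp
    have "(real t - 1) / (real t - 2) * (real (s * t) - real t) < real z \<longleftrightarrow>
          (real t - 1) * (real (s * t) - real t) < (real t - 2) * real z"
      using tp by (simp add: field_simps)
    also have "\<dots> \<longleftrightarrow> real_of_int ((int t - 1) * (int s * int t - int t)) < real_of_int ((int t - 2) * int z)"
      by simp
    also have "\<dots> \<longleftrightarrow> (int t - 1) * (int s * int t - int t) < (int t - 2) * int z"
      by (rule of_int_less_iff)
    finally show ?thesis by blast
  qed simp
  show ?thesis
  proof (cases "int t * int s < int z \<or> t = 1")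
    case A: True
    have N: "N_PolyDot_CMPC s t z = (P + 2) * (int t * int s) + th * (int t - 1) + 2 * int z - 1"
      using ND A by simp
    show ?thesis
    proof (cases "t = 1")
      case True
      have "P = 0"
        using True assms by (auto simp: P_def polydot_p_def)
      then show ?thesis using True N SS RHS2 by (simp add: th_def algebra_simps)
    next
      case False
      then have t2: "t \<ge> 2" using assms by simp
      have zg: "int t * int s < int z" using A False by simp
      have r2: "\<not> (z \<le> t * s)" using zg by (simp add: of_nat_mult[symmetric] del: of_nat_mult)
      have tp: "real t - 1 > 0" using t2 by simp
      have "real z > max (real (t * s)) (real (t * s) - real t + real_of_int P * real (t * s) / (real t - 1))
         \<longleftrightarrow> real z > real (t * s) - real t + real_of_int P * real (t * s) / (real t - 1)"
        using zg by (simp add: of_nat_mult[symmetric] del: of_nat_mult) 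
      also have "\<dots> \<longleftrightarrow> (real t - 1) * real z > (real t - 1) * (real (t * s) - real t) + real_of_int P * real (t * s)"
        using tp by (simp add: field_simps)
      also have "\<dots> \<longleftrightarrow> real_of_int ((int t - 1) * int z) > real_of_int ((int t - 1) * (int t * int s - int t) + P * (int t * int s))"
        by simp
      also have "\<dots> \<longleftrightarrow> (int t - 1) * int z > (int t - 1) * (int t * int s - int t) + P * (int t * int s)"
        by (rule of_int_less_iff)
      also have "\<dots> \<longleftrightarrow> N_PolyDot_CMPC s t z < N_SSMM s t z"
        unfolding N SS th_def by (simp add: algebra_simps)
      finally show ?thesis using False r2 PS by auto
    qed
  next
    case nA: False
    then have zle: "int z \<le> int t * int s" and t1: "t \<noteq> 1" by auto
    have zle': "z \<le> t * s" using zle by (simp add: of_nat_mult[symmetric] del: of_nat_mult)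
    have L1: "\<not> (real z > max (real (t * s)) (real (t * s) - real t + real_of_int P * real (t * s) / (real t - 1)))"
    proof -
      have "real z \<le> real (t * s)" using zle' by (simp only: of_nat_le_iff)
      then show ?thesis by (meson max.cobounded1 order_trans not_less)
    qed
    show ?thesis
    proof (cases "s = 1")
      case True
      then have "z \<le> t" using zle' by simp
      then have N: "N_PolyDot_CMPC s t z = int t ^ 2 + 2 * int t + int t * int z - 1"
        using ND nA True t1 by simp
      show ?thesis using True L1 PS N SS \<open>z \<le> t\<close> by (simp add: power2_eq_square algebra_simps)
    next
      case sn: False
      then have s2: "s \<ge> 2" using assms by simp
      have t2: "t \<ge> 2" using t1 assms by simp
      have ts: "int t * int s \<ge> 2 * int t" proof - have "int t * 2 \<le> int t * int s" using s2 by (intro mult_left_mono) auto then show ?thesis by (simp add: mult.commute) qed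
      have R2: "N_PolyDot_CMPC s t z < N_SSMM s t z \<longleftrightarrow> (int t - 1) * (int s * int t - int t) < (int t - 2) * int z"
      proof (cases "int t * int s - int t < int z")
        case True
        then have N: "N_PolyDot_CMPC s t z = 2 * (int t * int s) + th * (int t - 1) + 3 * int z - 1"
          using ND nA sn t1 zle by simp
        show ?thesis unfolding N SS th_def by (simp add: algebra_simps)
      next
        case c2: False
        have ge: "(int t - 1) * (int s * int t - int t) \<ge> (int t - 2) * int z"
        proof -
          have "(int t - 2) * int z \<le> (int t - 2) * (int t * int s - int t)"
            using c2 t2 by (intro mult_left_mono) auto
          also have "\<dots> \<le> (int t - 1) * (int t * int s - int t)"
            using ts by (intro mult_right_mono) auto
          also have "\<dots> = (int t - 1) * (int s * int t - int t)" by (simp add: mult.commute)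
          finally show ?thesis .
        qed
        have "N_PolyDot_CMPC s t z \<ge> N_SSMM s t z"
        proof (cases "int t * int s - 2 * int t < int z")
          case True
          then have N: "N_PolyDot_CMPC s t z = 2 * (int t * int s) + th * (int t - 1) + 2 * int z - 1"
            using ND nA sn t1 c2 by simp
          have "(int t - 1) * int z \<le> (int t - 1) * (int t * int s - int t)"
            using c2 t2 by (intro mult_left_mono) auto
          then show ?thesis unfolding N SS th_def by (simp add: algebra_simps)
        next
          case c3: False
          show ?thesis
          proof (cases "u < real_of_int (int z)")
            case True
            then have N: "N_PolyDot_CMPC s t z = (int t + 1) * (int t * int s) + (int t - 1) * (int z + int t - 1) + 2 * int z - 1"
              using ND nA sn t1 c2 c3 by simp
            have "0 \<le> (int t - 1) * (int t - 1)" by simp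
            then show ?thesis unfolding N SS th_def by (simp add: algebra_simps)
          next
            case c4: False
            then have N: "N_PolyDot_CMPC s t z = th * int t + int z"
              using ND nA sn t1 c2 c3 by simp
            have key: "int t * int z \<le> int t * int t * int s - int t * int t - int t * int s + 1"
            proof (cases "real_of_int (int z) \<le> real_of_int (int t * int s - 2 * int t - int s + 2)")
              case True
              then have "int z \<le> int t * int s - 2 * int t - int s + 2" by (simp only: of_int_le_iff)
              then have "int t * int z \<le> int t * (int t * int s - 2 * int t - int s + 2)"
                using t2 by (intro mult_left_mono) auto
              moreover have "0 \<le> (int t - 1) * (int t - 1)" by simp
              ultimately show ?thesis by (simp add: algebra_simps)
            next
              case False
              then have "real_of_int (int z) \<le> real_of_int (int t * int s - 2 * int t + 1) / 2"
                using c4 u_def by (simp add: max_def split: if_splits)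
              then have "2 * int z \<le> int t * int s - 2 * int t + 1" by (rule half_le)
              then have "int t * (2 * int z) \<le> int t * (int t * int s - 2 * int t + 1)"
                using t2 by (intro mult_left_mono) auto
              moreover have "0 \<le> (int t - 2) * (int t * int s - 1)"
                using t2 ts by (intro mult_nonneg_nonneg) auto
              ultimately show ?thesis by (simp add: algebra_simps)
            qed
            show ?thesis unfolding N SS th_def using key by (simp add: algebra_simps)
          qed
        qed
        then show ?thesis using ge by simp
      qed
      have tg: "t > 2" if "(int t - 1) * (int s * int t - int t) < (int t - 2) * int z"
      proof (rule ccontr)
        assume "\<not> t > 2"
        then have "t = 2" using t2 by simp
        then show False using that s2 by simp
      qed
      have L1': "\<not> (real z > max (real (t * s)) (real (t * s) - real t + real_of_int (polydot_p s t z) * real (t * s) / (real t - 1)))"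
        using L1 PS by simp
      show ?thesis using R2 RHS2 L1' sn zle' tg by blast
    qed
  qed
qed

end
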